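(* Let $n\ge1$, $\kappa_i,\theta_i,\sigma_i>0$ for $i=1,\dots,n$, and $\nu_i:=2\kappa_i\theta_i/\sigma_i^2$. Let $\pi_{\underline\nu}$ be the probability measure on $\mathbb R_+^n$ with density $\pi_{\underline\nu}(x)=\prod_{i=1}^n N_i\,x_i^{\nu_i-1}e^{-\nu_i x_i/\theta_i}$, $N_i=(\nu_i/\theta_i)^{\nu_i}/\Gamma(\nu_i)$ (a product of Gamma distributions). Consider the Dirichlet form associated with the generator $Lf(x)=\sum_{i=1}^n\big[\tfrac12\sigma_i^2x_i\partial_{x_ix_i}f(x)+\kappa_i(\theta_i-x_i)\partial_{x_i}f(x)\big]$ of $n$ independent CIR processes, namely $$D(f)=-\int f\,Lf\,d\pi_{\underline\nu}=\frac12\sum_{i=1}^n\sigma_i^2\int_{\mathbb R_+^n}x_i\,[\partial_{x_i}f(x)]^2\,d\pi_{\underline\nu}(x).$$ If $\sum_{i=1}^n\nu_i\ge 1$, then the origin $\{0\}$ is polar for this Dirichlet form.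
   Context: The generator $L$ acts on smooth functions $f$ on $\mathbb R_+^n$ with $\partial_{x_i}f(x)=0$ whenever $x_i=0$; $D$ is understood as the closure of the form defined on such functions, with domain $\mathcal D$. For $c>0$ set $D_c(f)=D(f)+c\int f^2\,d\pi_{\underline\nu}$. The capacity of an open set $\mathcal O\subset\mathbb R_+^n$ is $\mathrm{cap}(\mathcal O)=\inf\{D_1(f): f\in\mathcal D,\ f\ge1 \text{ on }\mathcal O\}$, and for an arbitrary set $B$, $\mathrm{cap}(B)=\inf\{\mathrm{cap}(\mathcal O):\mathcal O\supset B \text{ open}\}$. A set is polar if it has zero capacity (equivalently zero capacity with respect to $D_c$ for any $c>0$). *)

theory Defs
  imports "HOL-Analysis.Analysis" "HOL-Probability.Probability"
begin

definition Rplus :: "(real ^ 'n) set" where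
  "Rplus = {x. \<forall>i. 0 \<le> x $ i}"

definition pderiv_i :: "(real ^ 'n \<Rightarrow> real) \<Rightarrow> 'n \<Rightarrow> real ^ 'n \<Rightarrow> real" where
  "pderiv_i g i x = frechet_derivative g (at x) (axis i 1)"

fun Ck :: "nat \<Rightarrow> (real ^ 'n \<Rightarrow> real) \<Rightarrow> bool" where
  "Ck 0 g = continuous_on UNIV g"
| "Ck (Suc k) g = ((\<forall>x. g differentiable (at x)) \<and> continuous_on UNIV g
                    \<and> (\<forall>i. Ck k (\<lambda>x. pderiv_i g i x)))"

definition smooth :: "(real ^ 'n \<Rightarrow> real) \<Rightarrow> bool" where
  "smooth g = (\<forall>k. Ck k g)"

text \<open>Test functions: restrictions to R_+^n of compactly supported smooth functions
  on R^n satisfying the Neumann condition d_i f(x) = 0 whenever x_i = 0.\<close>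
definition test_fun :: "(real ^ 'n \<Rightarrow> real) \<Rightarrow> bool" where
  "test_fun g = (smooth g \<and> bounded {x. g x \<noteq> 0}
     \<and> (\<forall>x\<in>Rplus. \<forall>i. x $ i = 0 \<longrightarrow> pderiv_i g i x = 0))"

definition nu :: "('n \<Rightarrow> real) \<Rightarrow> ('n \<Rightarrow> real) \<Rightarrow> ('n \<Rightarrow> real) \<Rightarrow> 'n \<Rightarrow> real" where
  "nu \<kappa> \<theta> \<sigma> i = 2 * \<kappa> i * \<theta> i / (\<sigma> i)^2"

definition gamma_prod :: "('n::finite \<Rightarrow> real) \<Rightarrow> ('n \<Rightarrow> real) \<Rightarrow> (real ^ 'n) measure" where
  "gamma_prod \<nu> \<theta> = density lborel (\<lambda>x. ennreal (indicator Rplus x *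
      (\<Prod>i\<in>UNIV. ((\<nu> i / \<theta> i) powr \<nu> i / Gamma (\<nu> i))
                  * (x $ i) powr (\<nu> i - 1) * exp (- \<nu> i * x $ i / \<theta> i))))"

definition CIR_form :: "('n::finite \<Rightarrow> real) \<Rightarrow> ('n \<Rightarrow> real) \<Rightarrow> ('n \<Rightarrow> real)
    \<Rightarrow> (real ^ 'n \<Rightarrow> real) \<Rightarrow> real" where
  "CIR_form \<kappa> \<theta> \<sigma> g = 1/2 * (\<Sum>i\<in>UNIV. (\<sigma> i)^2 *
      integral\<^sup>L (gamma_prod (nu \<kappa> \<theta> \<sigma>) \<theta>) (\<lambda>x. x $ i * (pderiv_i g i x)^2))"

text \<open>Capacity (w.r.t. D_1 of the closure of the form) of a relatively open set O of R_+^n: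
  infimum of D_1(f) = lim (D(g_k) + int g_k^2) over f in the domain of the closure,
  given through approximating test-function sequences g_k that converge to f in L^2(pi)
  and are D-Cauchy, with f \<ge> 1 pi-a.e. on O.\<close>
definition cap_open :: "('n::finite \<Rightarrow> real) \<Rightarrow> ('n \<Rightarrow> real) \<Rightarrow> ('n \<Rightarrow> real)
    \<Rightarrow> (real ^ 'n) set \<Rightarrow> ereal" where
  "cap_open \<kappa> \<theta> \<sigma> U = (let \<pi> = gamma_prod (nu \<kappa> \<theta> \<sigma>) \<theta>; D = CIR_form \<kappa> \<theta> \<sigma> in
     Inf {ereal c | c. \<exists>g f. (\<forall>k. test_fun (g k))
        \<and> f \<in> borel_measurable \<pi> \<and> integrable \<pi> (\<lambda>x. (f x)^2)
        \<and> (\<lambda>k. integral\<^sup>L \<pi> (\<lambda>x. (g k x - f x)^2)) \<longlonglongrightarrow> 0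
        \<and> (\<forall>\<epsilon>>0. \<exists>N. \<forall>k\<ge>N. \<forall>m\<ge>N. D (\<lambda>x. g k x - g m x) < \<epsilon>)
        \<and> (\<lambda>k. D (g k) + integral\<^sup>L \<pi> (\<lambda>x. (g k x)^2)) \<longlonglongrightarrow> c
        \<and> (AE x in \<pi>. x \<in> U \<longrightarrow> 1 \<le> f x)})"

definition cap :: "('n::finite \<Rightarrow> real) \<Rightarrow> ('n \<Rightarrow> real) \<Rightarrow> ('n \<Rightarrow> real)
    \<Rightarrow> (real ^ 'n) set \<Rightarrow> ereal" where
  "cap \<kappa> \<theta> \<sigma> B = Inf {cap_open \<kappa> \<theta> \<sigma> U | U.
      openin (top_of_set Rplus) U \<and> B \<subseteq> U}"

definition polar :: "('n::finite \<Rightarrow> real) \<Rightarrow> ('n \<Rightarrow> real) \<Rightarrow> ('n \<Rightarrow> real)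
    \<Rightarrow> (real ^ 'n) set \<Rightarrow> bool" where
  "polar \<kappa> \<theta> \<sigma> B = (cap \<kappa> \<theta> \<sigma> B = 0)"

end

theory Submission
  imports Defs "HOL-Computational_Algebra.Polynomial"
begin

lemma pderiv_eq: "(f has_derivative F) (at x) \<Longrightarrow> pderiv_i f i x = F (axis i 1)"
  unfolding pderiv_i_def using frechet_derivative_at by metis

lemma fdw: "f differentiable (at x) \<Longrightarrow> (f has_derivative frechet_derivative f (at x)) (at x)"
  using frechet_derivative_works by blast

lemma Ck_Suc_mono: "Ck (Suc k) g \<Longrightarrow> Ck k g"
proof (induction k arbitrary: g)
  case 0 then show ?case by simp
next
  case (Suc k) then show ?case by (metis Ck.simps(2))
qed

lemma Ck_cont: "Ck k g \<Longrightarrow> continuous_on UNIV g"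
  by (cases k) auto

lemma Ck_add: "Ck k f \<Longrightarrow> Ck k g \<Longrightarrow> Ck k (\<lambda>x. f x + g x)"
proof (induction k arbitrary: f g)
  case 0 then show ?case by (auto intro: continuous_on_add)
next
  case (Suc k)
  have df: "\<And>x. f differentiable (at x)" and dg: "\<And>x. g differentiable (at x)" using Suc.prems by auto
  have eq: "(\<lambda>x. pderiv_i (\<lambda>x. f x + g x) i x) = (\<lambda>x. pderiv_i f i x + pderiv_i g i x)" for i
  proof
    fix x
    show "pderiv_i (\<lambda>x. f x + g x) i x = pderiv_i f i x + pderiv_i g i x"
      using pderiv_eq[OF has_derivative_add[OF fdw[OF df[of x]] fdw[OF dg[of x]]]]
      by (simp add: pderiv_i_def)
  qed
  show ?case using Suc df dg by (auto simp: eq intro: continuous_on_add)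
qed

lemma Ck_mult: "Ck k f \<Longrightarrow> Ck k g \<Longrightarrow> Ck k (\<lambda>x. f x * g x)"
proof (induction k arbitrary: f g)
  case 0 then show ?case by (auto intro: continuous_on_mult)
next
  case (Suc k)
  have df: "\<And>x. f differentiable (at x)" and dg: "\<And>x. g differentiable (at x)" using Suc.prems by auto
  have eq: "(\<lambda>x. pderiv_i (\<lambda>x. f x * g x) i x) = (\<lambda>x. f x * pderiv_i g i x + pderiv_i f i x * g x)" for i
  proof
    fix x
    show "pderiv_i (\<lambda>x. f x * g x) i x = f x * pderiv_i g i x + pderiv_i f i x * g x"
      using pderiv_eq[OF has_derivative_mult[OF fdw[OF df[of x]] fdw[OF dg[of x]]]]
      by (simp add: pderiv_i_def)
  qed
  have "Ck k (\<lambda>x. f x * pderiv_i g i x + pderiv_i f i x * g x)" for i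
  proof (intro Ck_add)
    show "Ck k (\<lambda>x. f x * pderiv_i g i x)" using Suc.IH[of f "pderiv_i g i"] Suc.prems Ck_Suc_mono by auto
    show "Ck k (\<lambda>x. pderiv_i f i x * g x)" using Suc.IH[of "pderiv_i f i" g] Suc.prems Ck_Suc_mono by auto
  qed
  moreover have "\<forall>x. (\<lambda>x. f x * g x) differentiable (at x)" using df dg by auto
  ultimately show ?case using Suc.prems by (auto simp: eq intro: continuous_on_mult)
qed

lemma Ck_const: "Ck k (\<lambda>x::real^'n. c)"
proof (induction k arbitrary: c)
  case 0 then show ?case by simp
next
  case (Suc k)
  have eq: "pderiv_i (\<lambda>x::real^'n. c) i = (\<lambda>x. 0)" for i
    by (simp add: pderiv_i_def fun_eq_iff)
  have "Ck k (pderiv_i (\<lambda>x::real^'n. c) i)" for i unfolding eq by (rule Suc.IH)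
  then show ?case by simp
qed

lemma Ck_comp_id: "Ck k (\<lambda>x::real^'n. x $ j)"
proof (cases k)
  case 0 then show ?thesis by (simp add: continuous_on_component)
next
  case (Suc m)
  have hd: "((\<lambda>x::real^'n. x $ j) has_derivative (\<lambda>v. v $ j)) (at x)" for x
    by (rule bounded_linear_imp_has_derivative) (simp add: bounded_linear_vec_nth)
  have "(\<lambda>x. pderiv_i (\<lambda>x::real^'n. x $ j) i x) = (\<lambda>x. axis i 1 $ j)" for i
    using pderiv_eq[OF hd] by auto
  moreover have "(\<lambda>x::real^'n. x $ j) differentiable (at x)" for x using hd by (auto simp: differentiable_def)
  ultimately show ?thesis using Suc by (simp add: Ck_const continuous_on_component)
qed

lemma Ck_inverse: "Ck k f \<Longrightarrow> (\<And>x. f x \<noteq> 0) \<Longrightarrow> Ck k (\<lambda>x. inverse (f x))"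
proof (induction k arbitrary: f)
  case 0 then show ?case by (auto intro: continuous_on_inverse)
next
  case (Suc k)
  have df: "\<And>x. f differentiable (at x)" using Suc.prems by auto
  have hd: "((\<lambda>x. inverse (f x)) has_derivative (\<lambda>h. - (inverse (f x) * frechet_derivative f (at x) h * inverse (f x)))) (at x)" for x
    using Deriv.has_derivative_inverse[OF Suc.prems(2) fdw[OF df[of x]]] .
  have eq: "(\<lambda>x. pderiv_i (\<lambda>x. inverse (f x)) i x) = (\<lambda>x. - pderiv_i f i x * (inverse (f x) * inverse (f x)))" for i
    using pderiv_eq[OF hd] by (auto simp: pderiv_i_def fun_eq_iff)
  have ck: "Ck k (\<lambda>x. inverse (f x))" using Suc Ck_Suc_mono by blast
  have "Ck k (\<lambda>x. - pderiv_i f i x * (inverse (f x) * inverse (f x)))" for i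
  proof -
    have "Ck k (\<lambda>x. - 1 * pderiv_i f i x)" using Suc.prems(1) by (intro Ck_mult Ck_const) auto
    then have "Ck k (\<lambda>x. - pderiv_i f i x)" by simp
    then show ?thesis by (intro Ck_mult ck)
  qed
  moreover have "\<forall>x. (\<lambda>x. inverse (f x)) differentiable (at x)" using hd by (auto simp: differentiable_def)
  ultimately show ?case using Suc.prems by (auto simp: eq intro!: continuous_on_inverse)
qed

definition Ef :: "real poly \<Rightarrow> real \<Rightarrow> real" where
  "Ef p y = (if y > 0 then poly p (1/y) * exp (-1/y) else 0)"

definition dpol :: "real poly \<Rightarrow> real poly" where
  "dpol p = [:0,0,1:] * (p - pderiv p)"

lemma poly_exp_lim: "((\<lambda>z::real. poly p z / exp z) \<longlongrightarrow> 0) at_top"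
proof -
  have "((\<lambda>z. \<Sum>i\<le>degree p. coeff p i * (z^i / exp z)) \<longlongrightarrow> (\<Sum>i\<le>degree p. coeff p i * 0)) at_top"
    by (intro tendsto_intros) (use tendsto_power_div_exp_0 in blast)
  then show ?thesis by (simp add: poly_altdef sum_divide_distrib)
qed

lemma Ef_deriv: "(Ef p has_real_derivative Ef (dpol p) y) (at y)"
proof -
  consider "y > 0" | "y < 0" | "y = 0" by linarith
  then show ?thesis
  proof cases
    case 1
    have d: "((\<lambda>z. poly p (1/z) * exp (-1/z)) has_real_derivative
        (poly (pderiv p) (1/y) * (- 1 / y^2) * exp (-1/y) + poly p (1/y) * (exp (-1/y) * (1/y^2)))) (at y)"
      using 1 by (auto intro!: derivative_eq_intros DERIV_chain2[OF poly_DERIV] simp: power2_eq_square field_simps)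
    have eq: "Ef (dpol p) y = poly (pderiv p) (1/y) * (- 1 / y^2) * exp (-1/y) + poly p (1/y) * (exp (-1/y) * (1/y^2))"
      using 1 by (simp add: Ef_def dpol_def algebra_simps power2_eq_square)
    show ?thesis unfolding eq
      by (rule has_field_derivative_transform_within_open[OF d, of "{0<..}"]) (use 1 in \<open>auto simp: Ef_def\<close>)
  next
    case 2
    have eq: "Ef (dpol p) y = 0" using 2 by (simp add: Ef_def)
    show ?thesis unfolding eq
      by (rule has_field_derivative_transform_within_open[OF DERIV_const, of "{..<0}"]) (use 2 in \<open>auto simp: Ef_def\<close>)
  next
    case 3
    have eq: "Ef (dpol p) y = 0" using 3 by (simp add: Ef_def)
    have L: "((\<lambda>z. (Ef p z - Ef p 0) / (z - 0)) \<longlongrightarrow> 0) (at_left 0)"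
    proof (rule Lim_transform_eventually[OF tendsto_const])
      show "\<forall>\<^sub>F x in at_left 0. 0 = (Ef p x - Ef p 0) / (x - 0)"
        by (auto simp: eventually_at_left_field Ef_def intro!: exI[of _ "-1"])
    qed
    have R: "((\<lambda>z. (Ef p z - Ef p 0) / (z - 0)) \<longlongrightarrow> 0) (at_right 0)"
      unfolding filterlim_at_right_to_top
    proof (rule Lim_transform_eventually[OF poly_exp_lim[of "[:0,1:] * p"]])
      show "\<forall>\<^sub>F x in at_top. poly ([:0, 1:] * p) x / exp x = (Ef p (inverse x) - Ef p 0) / (inverse x - 0)"
        using eventually_gt_at_top[of 0]
      proof eventually_elim
        case (elim x)
        have "Ef p (inverse x) = poly p x * exp (- x)" using elim by (simp add: Ef_def field_simps)
        moreover have "Ef p 0 = 0" by (simp add: Ef_def)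
        ultimately show ?case using elim by (simp add: exp_minus field_simps)
      qed
    qed
    have "Ef (dpol p) 0 = 0" by (simp add: Ef_def)
    then show ?thesis unfolding 3 has_field_derivative_iff
      using filterlim_split_at[OF L R] by simp
  qed
qed

lemma Ef_cont: "continuous_on UNIV (Ef p)"
  using Ef_deriv by (meson DERIV_continuous continuous_at_imp_continuous_on)

lemma Ck_Ef: "Ck k u \<Longrightarrow> Ck k (\<lambda>x. Ef p (u x))"
proof (induction k arbitrary: p u)
  case 0 then show ?case using Ef_cont by (auto intro: continuous_on_compose2[OF Ef_cont])
next
  case (Suc k)
  have du: "\<And>x. u differentiable (at x)" using Suc.prems by auto
  have hd: "((\<lambda>x. Ef p (u x)) has_derivative (\<lambda>v. Ef (dpol p) (u x) * frechet_derivative u (at x) v)) (at x)" for x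
    using has_derivative_compose[OF fdw[OF du[of x]] Ef_deriv[of p "u x", unfolded has_field_derivative_def]]
    by (simp add: mult.commute)
  have eq: "(\<lambda>x. pderiv_i (\<lambda>x. Ef p (u x)) i x) = (\<lambda>x. Ef (dpol p) (u x) * pderiv_i u i x)" for i
    using pderiv_eq[OF hd] by (auto simp: pderiv_i_def fun_eq_iff)
  have "Ck k (\<lambda>x. Ef (dpol p) (u x) * pderiv_i u i x)" for i
    using Suc.IH[of u "dpol p"] Suc.prems Ck_Suc_mono by (intro Ck_mult) auto
  moreover have dd: "\<forall>x. (\<lambda>x. Ef p (u x)) differentiable (at x)" using hd by (auto simp: differentiable_def)
  moreover have "continuous_on UNIV (\<lambda>x. Ef p (u x))"
    using dd by (simp add: differentiable_imp_continuous_on differentiable_on_def differentiable_at_withinI)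
  ultimately show ?case by (auto simp: eq)
qed

definition ee :: "real \<Rightarrow> real" where "ee = Ef 1"
definition ee' :: "real \<Rightarrow> real" where "ee' = Ef (dpol 1)"

lemma ee_simp: "ee y = (if y > 0 then exp (-1/y) else 0)" by (simp add: ee_def Ef_def)
lemma ee_nonneg: "ee y \<ge> 0" by (simp add: ee_simp)
lemma ee_pos: "y > 0 \<Longrightarrow> ee y > 0" by (simp add: ee_simp)
lemma ee'_zero: "y \<le> 0 \<Longrightarrow> ee' y = 0" by (simp add: ee'_def Ef_def)
lemma ee_deriv: "(ee has_real_derivative ee' y) (at y)" unfolding ee_def ee'_def by (rule Ef_deriv)
lemma ee_cont: "continuous_on UNIV ee" unfolding ee_def by (rule Ef_cont)
lemma ee'_cont: "continuous_on UNIV ee'" unfolding ee'_def by (rule Ef_cont)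

definition den :: "real \<Rightarrow> real" where "den s = ee (1 - s) + ee (s - 1/4)"
lemma den_pos: "den s > 0"
proof (cases "s < 1")
  case True then show ?thesis using ee_pos[of "1-s"] ee_nonneg[of "s-1/4"] by (simp add: den_def)
next
  case False then show ?thesis using ee_pos[of "s-1/4"] ee_nonneg[of "1-s"] by (simp add: den_def)
qed

definition hb :: "real \<Rightarrow> real" where "hb s = ee (1 - s) / den s"
definition hb' :: "real \<Rightarrow> real" where
  "hb' s = (- ee' (1 - s) * ee (s - 1/4) - ee (1 - s) * ee' (s - 1/4)) / (den s * den s)"

lemma hb_deriv: "(hb has_real_derivative hb' s) (at s)"
proof -
  have a: "((\<lambda>s. ee (1 - s)) has_real_derivative ee' (1 - s) * (- 1)) (at s)"
    by (rule DERIV_chain2[OF ee_deriv]) (auto intro!: derivative_eq_intros)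
  have b: "((\<lambda>s. ee (s - 1/4)) has_real_derivative ee' (s - 1/4) * 1) (at s)"
    by (rule DERIV_chain2[OF ee_deriv]) (auto intro!: derivative_eq_intros)
  have d: "(den has_real_derivative ee' (1 - s) * (- 1) + ee' (s - 1/4) * 1) (at s)"
    unfolding den_def[abs_def] by (rule DERIV_add[OF a b])
  have "((\<lambda>s. ee (1 - s) / den s) has_real_derivative
      ((ee' (1 - s) * (- 1)) * den s - ee (1 - s) * (ee' (1 - s) * (- 1) + ee' (s - 1/4) * 1)) / (den s * den s)) (at s)"
    by (rule DERIV_divide[OF a d]) (use den_pos[of s] in auto)
  moreover have "((ee' (1 - s) * (- 1)) * den s - ee (1 - s) * (ee' (1 - s) * (- 1) + ee' (s - 1/4) * 1)) / (den s * den s) = hb' s"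
    unfolding hb'_def den_def by (simp add: algebra_simps)
  ultimately show ?thesis unfolding hb_def[abs_def] by simp
qed

lemma den_cont: "continuous_on UNIV den"
  unfolding den_def[abs_def]
  by (intro continuous_on_add continuous_on_compose2[OF ee_cont] continuous_intros) auto

lemma hb'_cont: "continuous_on UNIV hb'"
proof -
  have c1: "continuous_on UNIV (\<lambda>s. ee (1 - s))"
    by (rule continuous_on_compose2[OF ee_cont]) (auto intro: continuous_intros)
  have c2: "continuous_on UNIV (\<lambda>s. ee (s - 1/4))"
    by (rule continuous_on_compose2[OF ee_cont]) (auto intro: continuous_intros)
  have c3: "continuous_on UNIV (\<lambda>s. ee' (1 - s))"
    by (rule continuous_on_compose2[OF ee'_cont]) (auto intro: continuous_intros)
  have c4: "continuous_on UNIV (\<lambda>s. ee' (s - 1/4))"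
    by (rule continuous_on_compose2[OF ee'_cont]) (auto intro: continuous_intros)
  have c5: "continuous_on UNIV (\<lambda>s. den s * den s)"
    by (rule continuous_on_mult[OF den_cont den_cont])
  have "continuous_on UNIV (\<lambda>s. (- ee' (1 - s) * ee (s - 1/4) - ee (1 - s) * ee' (s - 1/4)) / (den s * den s))"
    by (rule continuous_on_divide[OF continuous_on_diff[OF continuous_on_mult[OF continuous_on_minus[OF c3] c2] continuous_on_mult[OF c1 c4]] c5])
       (use den_pos in \<open>auto simp: less_imp_neq[symmetric]\<close>)
  then show ?thesis unfolding hb'_def[abs_def] .
qed

lemma hb'_zero: "s < 1/4 \<or> s > 1 \<Longrightarrow> hb' s = 0"
  unfolding hb'_def by (auto simp: ee'_zero ee_simp)

lemma hb_one: "s \<le> 1/4 \<Longrightarrow> hb s = 1"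
  unfolding hb_def den_def using ee_pos[of "1-s"] by (simp add: ee_simp)

lemma hb_zero: "s \<ge> 1 \<Longrightarrow> hb s = 0"
  unfolding hb_def by (simp add: ee_simp)

lemma hb_nonneg: "hb s \<ge> 0"
  unfolding hb_def using den_pos[of s] ee_nonneg by simp

lemma hb_le1: "hb s \<le> 1"
  unfolding hb_def using den_pos[of s] ee_nonneg[of "s - 1/4"] by (simp add: den_def)

lemma hb'_bound: "\<exists>M>0. \<forall>s. \<bar>hb' s\<bar> \<le> M"
proof -
  have "compact (hb' ` {1/4..1})"
    by (rule compact_continuous_image[OF continuous_on_subset[OF hb'_cont]]) auto
  then obtain M where M: "\<forall>y\<in>hb' ` {1/4..1}. norm y \<le> M" by (meson bounded_iff compact_imp_bounded)
  have "\<bar>hb' s\<bar> \<le> max M 1" for s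
  proof (cases "s \<in> {1/4..1}")
    case True then have "norm (hb' s) \<le> M" using M by blast
    then show ?thesis by simp
  next
    case False then show ?thesis using hb'_zero[of s] by auto
  qed
  then show ?thesis by (intro exI[of _ "max M 1"]) auto
qed

lemma Ck_sum: "finite A \<Longrightarrow> (\<And>a. a \<in> A \<Longrightarrow> Ck k (f a)) \<Longrightarrow> Ck k (\<lambda>x::real^'n. \<Sum>a\<in>A. f a x)"
proof (induction A rule: finite_induct)
  case empty then show ?case using Ck_const[of k 0] by simp
next
  case (insert a A) then show ?case by (simp add: Ck_add)
qed

lemma Ck_q: "Ck k (\<lambda>x::real^'n. (x \<bullet> x) / t)"
proof -
  have "Ck k (\<lambda>x::real^'n. \<Sum>j\<in>UNIV. (1/t) * (x $ j * x $ j))"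
    by (intro Ck_sum Ck_mult Ck_const Ck_comp_id) auto
  moreover have "(\<lambda>x::real^'n. \<Sum>j\<in>UNIV. (1/t) * (x $ j * x $ j)) = (\<lambda>x. (x \<bullet> x) / t)"
    by (auto simp: inner_vec_def sum_divide_distrib fun_eq_iff)
  ultimately show ?thesis by simp
qed

lemma Ck_hbq: "Ck k (\<lambda>x::real^'n. hb ((x \<bullet> x) / t))"
proof -
  have e1: "Ck k (\<lambda>x::real^'n. ee (1 - (x \<bullet> x) / t))"
    unfolding ee_def by (intro Ck_Ef) (use Ck_add[OF Ck_const[of k 1] Ck_mult[OF Ck_const[of k "-1"] Ck_q[of k t]]] in simp)
  have e2: "Ck k (\<lambda>x::real^'n. ee ((x \<bullet> x) / t - 1/4))"
    unfolding ee_def by (intro Ck_Ef) (use Ck_add[OF Ck_q[of k t] Ck_const[of k "-1/4"]] in simp)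
  have "Ck k (\<lambda>x::real^'n. ee (1 - (x \<bullet> x) / t) * inverse (den ((x \<bullet> x) / t)))"
    unfolding den_def using den_pos[unfolded den_def]
    by (intro Ck_mult e1 Ck_inverse Ck_add e2) (auto simp: less_imp_neq[symmetric] dest: less_imp_neq)
  then show ?thesis by (simp add: hb_def divide_inverse)
qed

lemma q_deriv: "((\<lambda>x::real^'n. (x \<bullet> x) / t) has_derivative (\<lambda>v. 2 * (x \<bullet> v) / t)) (at x)"
proof (cases "t = 0")
  case True then show ?thesis by simp
next
  case False then show ?thesis by (auto intro!: derivative_eq_intros simp: inner_commute field_simps)
qed

lemma hbq_deriv: "((\<lambda>x::real^'n. hb ((x \<bullet> x) / t)) has_derivative (\<lambda>v. hb' ((x \<bullet> x) / t) * (2 * (x \<bullet> v) / t))) (at x)"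
  using has_derivative_compose[OF q_deriv hb_deriv[of "(x \<bullet> x) / t", unfolded has_field_derivative_def]]
  by (simp add: mult.commute)

lemma Rplus_closed: "closed (Rplus :: (real^'n) set)"
  unfolding Rplus_def by (intro closed_Collect_all closed_Collect_le continuous_intros)

lemma Rplus_borel[measurable]: "(Rplus :: (real^'n) set) \<in> sets borel"
  using Rplus_closed by (rule borel_closed)

lemma sets_gamma[simp]: "sets (gamma_prod \<nu> \<theta>) = sets borel"
  by (simp add: gamma_prod_def)

lemma space_gamma[simp]: "space (gamma_prod \<nu> \<theta>) = UNIV"
  by (simp add: gamma_prod_def)

definition dens :: "('n::finite \<Rightarrow> real) \<Rightarrow> ('n \<Rightarrow> real) \<Rightarrow> real^'n \<Rightarrow> ennreal" where
  "dens \<nu> \<theta> = (\<lambda>x. ennreal (indicator Rplus x *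
      (\<Prod>i\<in>UNIV. ((\<nu> i / \<theta> i) powr \<nu> i / Gamma (\<nu> i))
                  * (x $ i) powr (\<nu> i - 1) * exp (- \<nu> i * x $ i / \<theta> i))))"

lemma gamma_prod_dens: "gamma_prod \<nu> \<theta> = density lborel (dens \<nu> \<theta>)"
  by (simp add: gamma_prod_def dens_def)

lemma dens_meas[measurable]: "dens \<nu> \<theta> \<in> borel_measurable borel"
  unfolding dens_def by measurable

lemma nn_integral_vec_prod:
  fixes \<phi> :: "'n::finite \<Rightarrow> real \<Rightarrow> ennreal"
  assumes [measurable]: "\<And>i. \<phi> i \<in> borel_measurable borel"
  shows "(\<integral>\<^sup>+x. (\<Prod>i\<in>UNIV. \<phi> i (x $ i)) \<partial>(lborel :: (real^'n) measure)) = (\<Prod>i\<in>UNIV. \<integral>\<^sup>+y. \<phi> i y \<partial>lborel)"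
proof -
  define f where "f b = \<phi> (axis_index (b::real^'n))" for b
  have "(\<integral>\<^sup>+x. (\<Prod>b\<in>Basis. f b (x \<bullet> b)) \<partial>(lborel :: (real^'n) measure)) = (\<Prod>b\<in>Basis. (\<integral>\<^sup>+x. f b x \<partial>lborel))"
    by (rule nn_integral_lborel_prod) (auto simp: f_def)
  moreover have "(\<Prod>b\<in>Basis. f b (x \<bullet> b)) = (\<Prod>i\<in>UNIV. \<phi> i (x $ i))" for x :: "real^'n"
    by (simp add: f_def Basis_vec_def UNION_singleton_eq_range prod.reindex axis_eq_axis inj_on_def inner_axis)
  moreover have "(\<Prod>b\<in>(Basis :: (real^'n) set). (\<integral>\<^sup>+x. f b x \<partial>lborel)) = (\<Prod>i\<in>UNIV. \<integral>\<^sup>+y. \<phi> i y \<partial>lborel)"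
    by (simp add: f_def Basis_vec_def UNION_singleton_eq_range prod.reindex axis_eq_axis inj_on_def)
  ultimately show ?thesis by simp
qed

lemma nn_integral_powr01:
  fixes a c \<rho> :: real
  assumes "a > 0" "c \<ge> 0" "\<rho> \<ge> 0"
  shows "(\<integral>\<^sup>+y. ennreal (indicator {0..\<rho>} y * (c * y powr (a - 1))) \<partial>lborel) = ennreal (c * \<rho> powr a / a)"
proof (rule nn_integral_has_integral_lborel)
  show "(\<lambda>y. indicator {0..\<rho>} y * (c * y powr (a - 1))) \<in> borel_measurable borel" by measurable
  show "0 \<le> indicator {0..\<rho>} y * (c * y powr (a - 1))" for y using assms by auto
  have "((\<lambda>y. c * y powr (a - 1)) has_integral (c * (\<rho> powr a / a))) {0..\<rho>}"
    using has_integral_mult_right[OF has_integral_powr_from_0[of "a - 1" \<rho>]] assms by simp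
  then have "((\<lambda>y. if y \<in> {0..\<rho>} then c * y powr (a - 1) else 0) has_integral (c * (\<rho> powr a / a))) UNIV"
    by (subst has_integral_restrict_UNIV)
  moreover have "(\<lambda>y. if y \<in> {0..\<rho>} then c * y powr (a - 1) else 0) = (\<lambda>y. indicator {0..\<rho>} y * (c * y powr (a - 1)))"
    by (auto simp: fun_eq_iff split: split_indicator)
  ultimately show "((\<lambda>y. indicator {0..\<rho>} y * (c * y powr (a - 1))) has_integral (c * \<rho> powr a / a)) UNIV" by simp
qed

definition Nc :: "('n \<Rightarrow> real) \<Rightarrow> ('n \<Rightarrow> real) \<Rightarrow> 'n \<Rightarrow> real" where
  "Nc \<nu> \<theta> i = (\<nu> i / \<theta> i) powr \<nu> i / Gamma (\<nu> i)"

lemma Nc_pos: "\<nu> i > 0 \<Longrightarrow> \<theta> i > 0 \<Longrightarrow> Nc \<nu> \<theta> i > 0"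
  by (simp add: Nc_def)

lemma cube_bound:
  fixes \<nu> \<theta> :: "'n::finite \<Rightarrow> real"
  assumes \<nu>: "\<And>i. \<nu> i > 0" and \<theta>: "\<And>i. \<theta> i > 0" and \<rho>: "\<rho> > 0"
  shows "emeasure (gamma_prod \<nu> \<theta>) {x. \<forall>i. x $ i \<le> \<rho>} \<le> ennreal (\<Prod>i\<in>UNIV. Nc \<nu> \<theta> i * \<rho> powr \<nu> i / \<nu> i)"
proof -
  define A where "A = {x::real^'n. \<forall>i. x $ i \<le> \<rho>}"
  have Ac: "closed A" unfolding A_def by (intro closed_Collect_all closed_Collect_le continuous_intros)
  then have [measurable]: "A \<in> sets borel" by (rule borel_closed)
  define \<phi> where "\<phi> i y = ennreal (indicator {0..\<rho>} y * (Nc \<nu> \<theta> i * y powr (\<nu> i - 1)))" for i y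
  have [measurable]: "\<phi> i \<in> borel_measurable borel" for i unfolding \<phi>_def by measurable
  have "emeasure (gamma_prod \<nu> \<theta>) A = (\<integral>\<^sup>+x. dens \<nu> \<theta> x * indicator A x \<partial>lborel)"
    unfolding gamma_prod_dens by (rule emeasure_density) auto
  also have "\<dots> \<le> (\<integral>\<^sup>+x. (\<Prod>i\<in>UNIV. \<phi> i (x $ i)) \<partial>lborel)"
  proof (rule nn_integral_mono)
    fix x :: "real^'n"
    have nn: "0 \<le> indicator {0..\<rho>} (x $ i) * (Nc \<nu> \<theta> i * x $ i powr (\<nu> i - 1))" for i
      using Nc_pos[of \<nu> i \<theta>] \<nu> \<theta> by (auto split: split_indicator)
    have rhs: "(\<Prod>i\<in>UNIV. \<phi> i (x $ i)) = ennreal (\<Prod>i\<in>UNIV. indicator {0..\<rho>} (x $ i) * (Nc \<nu> \<theta> i * x $ i powr (\<nu> i - 1)))"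
      unfolding \<phi>_def by (rule prod_ennreal) (use nn in auto)
    show "dens \<nu> \<theta> x * indicator A x \<le> (\<Prod>i\<in>UNIV. \<phi> i (x $ i))"
    proof (cases "x \<in> Rplus \<and> x \<in> A")
      case True
      have "(\<Prod>i\<in>UNIV. (\<nu> i / \<theta> i) powr \<nu> i / Gamma (\<nu> i) * (x $ i) powr (\<nu> i - 1) * exp (- \<nu> i * x $ i / \<theta> i))
          \<le> (\<Prod>i\<in>UNIV. indicator {0..\<rho>} (x $ i) * (Nc \<nu> \<theta> i * x $ i powr (\<nu> i - 1)))"
      proof (rule prod_mono, safe)
        fix i
        have xi: "0 \<le> x $ i" "x $ i \<le> \<rho>" using True by (auto simp: Rplus_def A_def)
        have e: "exp (- \<nu> i * x $ i / \<theta> i) \<le> 1" using xi \<nu>[of i] \<theta>[of i] by simp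
        have p: "0 \<le> (\<nu> i / \<theta> i) powr \<nu> i / Gamma (\<nu> i) * (x $ i) powr (\<nu> i - 1)"
          using Nc_pos[of \<nu> i \<theta>] \<nu> \<theta> by (simp add: Nc_def)
        show "0 \<le> (\<nu> i / \<theta> i) powr \<nu> i / Gamma (\<nu> i) * (x $ i) powr (\<nu> i - 1) * exp (- \<nu> i * x $ i / \<theta> i)"
          by (rule mult_nonneg_nonneg[OF p]) simp
        show "(\<nu> i / \<theta> i) powr \<nu> i / Gamma (\<nu> i) * (x $ i) powr (\<nu> i - 1) * exp (- \<nu> i * x $ i / \<theta> i)
          \<le> indicator {0..\<rho>} (x $ i) * (Nc \<nu> \<theta> i * x $ i powr (\<nu> i - 1))"
          using mult_left_mono[OF e p] xi by (simp add: Nc_def)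
      qed
      then show ?thesis using True unfolding rhs dens_def by (simp add: ennreal_leI)
    next
      case False
      then have "dens \<nu> \<theta> x * indicator A x = 0" by (auto simp: dens_def)
      then show ?thesis by (metis zero_le)
    qed
  qed
  also have "\<dots> = (\<Prod>i\<in>UNIV. \<integral>\<^sup>+y. \<phi> i y \<partial>lborel)" by (rule nn_integral_vec_prod) simp
  also have "\<dots> = (\<Prod>i\<in>UNIV. ennreal (Nc \<nu> \<theta> i * \<rho> powr \<nu> i / \<nu> i))"
    unfolding \<phi>_def using \<nu> \<theta> \<rho> Nc_pos[of \<nu> _ \<theta>] by (intro prod.cong refl nn_integral_powr01) (auto simp: less_imp_le)
  also have "\<dots> = ennreal (\<Prod>i\<in>UNIV. Nc \<nu> \<theta> i * \<rho> powr \<nu> i / \<nu> i)"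
  proof (rule prod_ennreal)
    fix i show "0 \<le> Nc \<nu> \<theta> i * \<rho> powr \<nu> i / \<nu> i"
      using \<nu>[of i] \<theta>[of i] Nc_pos[of \<nu> i \<theta>] by (meson divide_nonneg_pos less_imp_le mult_nonneg_nonneg powr_ge_zero)
  qed
  finally show ?thesis unfolding A_def .
qed

definition Cg :: "('n::finite \<Rightarrow> real) \<Rightarrow> ('n \<Rightarrow> real) \<Rightarrow> real" where
  "Cg \<nu> \<theta> = (\<Prod>i\<in>UNIV. Nc \<nu> \<theta> i / \<nu> i)"

definition Sb :: "real \<Rightarrow> (real^'n) set" where "Sb t = {x. x \<bullet> x \<le> t}"

lemma Sb_borel[measurable]: "Sb t \<in> sets borel"
  unfolding Sb_def by (intro borel_closed closed_Collect_le continuous_intros)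

lemma Cg_pos: "(\<And>i. \<nu> i > 0) \<Longrightarrow> (\<And>i. \<theta> i > 0) \<Longrightarrow> Cg \<nu> \<theta> > 0"
  unfolding Cg_def by (intro prod_pos divide_pos_pos Nc_pos) auto

lemma ball_bound:
  fixes \<nu> \<theta> :: "'n::finite \<Rightarrow> real"
  assumes \<nu>: "\<And>i. \<nu> i > 0" and \<theta>: "\<And>i. \<theta> i > 0" and t: "t > 0"
  shows "emeasure (gamma_prod \<nu> \<theta>) (Sb t) \<le> ennreal (Cg \<nu> \<theta> * sqrt t powr (\<Sum>i\<in>UNIV. \<nu> i))"
proof -
  have sub: "Sb t \<subseteq> {x::real^'n. \<forall>i. x $ i \<le> sqrt t}"
  proof safe
    fix x :: "real^'n" and i :: 'n assume "x \<in> Sb t"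
    then have "norm x \<le> sqrt t" by (simp add: Sb_def norm_eq_sqrt_inner)
    then show "x $ i \<le> sqrt t" using component_le_norm_cart[of x i] by linarith
  qed
  have "emeasure (gamma_prod \<nu> \<theta>) (Sb t) \<le> emeasure (gamma_prod \<nu> \<theta>) {x. \<forall>i. x $ i \<le> sqrt t}"
  proof (rule emeasure_mono[OF sub])
    have "closed {x::real^'n. \<forall>i. x $ i \<le> sqrt t}"
      by (intro closed_Collect_all closed_Collect_le continuous_intros)
    then show "{x::real^'n. \<forall>i. x $ i \<le> sqrt t} \<in> sets (gamma_prod \<nu> \<theta>)"
      using borel_closed by simp
  qed
  also have "\<dots> \<le> ennreal (\<Prod>i\<in>UNIV. Nc \<nu> \<theta> i * sqrt t powr \<nu> i / \<nu> i)"
    by (rule cube_bound) (use assms in auto)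
  also have "(\<Prod>i\<in>UNIV. Nc \<nu> \<theta> i * sqrt t powr \<nu> i / \<nu> i) = Cg \<nu> \<theta> * sqrt t powr (\<Sum>i\<in>UNIV. \<nu> i)"
  proof -
    have "(\<Prod>i\<in>UNIV. Nc \<nu> \<theta> i * sqrt t powr \<nu> i / \<nu> i) = (\<Prod>i\<in>UNIV. (Nc \<nu> \<theta> i / \<nu> i) * sqrt t powr \<nu> i)"
      by (rule prod.cong) auto
    also have "\<dots> = Cg \<nu> \<theta> * (\<Prod>i\<in>UNIV. sqrt t powr \<nu> i)"
      unfolding Cg_def by (rule prod.distrib)
    also have "(\<Prod>i\<in>UNIV. sqrt t powr \<nu> i) = sqrt t powr (\<Sum>i\<in>UNIV. \<nu> i)"
      using t by (simp add: powr_sum)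
    finally show ?thesis .
  qed
  finally show ?thesis .
qed

lemma ball_measure:
  fixes \<nu> \<theta> :: "'n::finite \<Rightarrow> real"
  assumes \<nu>: "\<And>i. \<nu> i > 0" and \<theta>: "\<And>i. \<theta> i > 0" and t: "t > 0" "t \<le> 1"
    and V: "(\<Sum>i\<in>UNIV. \<nu> i) \<ge> 1"
  shows "emeasure (gamma_prod \<nu> \<theta>) (Sb t) < \<infinity>"
    and "measure (gamma_prod \<nu> \<theta>) (Sb t) \<le> Cg \<nu> \<theta> * sqrt t"
proof -
  have b: "emeasure (gamma_prod \<nu> \<theta>) (Sb t) \<le> ennreal (Cg \<nu> \<theta> * sqrt t powr (\<Sum>i\<in>UNIV. \<nu> i))"
    by (rule ball_bound) (use assms in auto)
  then show fin: "emeasure (gamma_prod \<nu> \<theta>) (Sb t) < \<infinity>"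
    using le_less_trans[OF b ennreal_less_top] by simp
  have "sqrt t powr (\<Sum>i\<in>UNIV. \<nu> i) \<le> sqrt t powr 1"
    by (rule powr_mono') (use t V in auto)
  then have "sqrt t powr (\<Sum>i\<in>UNIV. \<nu> i) \<le> sqrt t" using t by simp
  then have le: "Cg \<nu> \<theta> * sqrt t powr (\<Sum>i\<in>UNIV. \<nu> i) \<le> Cg \<nu> \<theta> * sqrt t"
    by (rule mult_left_mono) (use Cg_pos[of \<nu> \<theta>] assms in auto)
  have "measure (gamma_prod \<nu> \<theta>) (Sb t) \<le> Cg \<nu> \<theta> * sqrt t powr (\<Sum>i\<in>UNIV. \<nu> i)"
    unfolding measure_def
    by (rule enn2real_leI[OF _ b]) (use Cg_pos[of \<nu> \<theta>] assms in auto)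
  with le show "measure (gamma_prod \<nu> \<theta>) (Sb t) \<le> Cg \<nu> \<theta> * sqrt t" by linarith
qed

definition tt :: "real \<Rightarrow> nat \<Rightarrow> real" where "tt \<tau> j = \<tau> * (1/8)^j"

definition GG :: "real \<Rightarrow> nat \<Rightarrow> real^'n \<Rightarrow> real" where
  "GG \<tau> N x = (1 / real N) * (\<Sum>j<N. hb ((x \<bullet> x) / tt \<tau> j))"

lemma tt_pos: "\<tau> > 0 \<Longrightarrow> tt \<tau> j > 0" by (simp add: tt_def)

lemma tt_le: "\<tau> > 0 \<Longrightarrow> j \<le> k \<Longrightarrow> tt \<tau> k \<le> tt \<tau> j"
  unfolding tt_def by (intro mult_left_mono power_decreasing) auto

lemma tt_lt8: "\<tau> > 0 \<Longrightarrow> j < k \<Longrightarrow> tt \<tau> k \<le> tt \<tau> j / 8"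
proof -
  assume \<tau>: "\<tau> > 0" and jk: "j < k"
  have "tt \<tau> k \<le> tt \<tau> (Suc j)" using tt_le[OF \<tau>] jk by simp
  also have "\<dots> = tt \<tau> j / 8" by (simp add: tt_def)
  finally show ?thesis .
qed

lemma Ck_GG: "Ck k (GG \<tau> N :: real^'n \<Rightarrow> real)"
proof -
  have "Ck k (\<lambda>x::real^'n. (1 / real N) * (\<Sum>j<N. hb ((x \<bullet> x) / tt \<tau> j)))"
    by (intro Ck_mult Ck_const Ck_sum Ck_hbq) auto
  then show ?thesis by (simp add: GG_def[abs_def])
qed

lemma GG_deriv: "(GG \<tau> N has_derivative (\<lambda>v. (1 / real N) * (\<Sum>j<N. hb' ((x \<bullet> x) / tt \<tau> j) * (2 * (x \<bullet> v) / tt \<tau> j)))) (at x)"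
  unfolding GG_def[abs_def]
  by (intro has_derivative_mult_right has_derivative_sum hbq_deriv)

lemma pderiv_GG: "pderiv_i (GG \<tau> N) i x = (1 / real N) * (\<Sum>j<N. hb' ((x \<bullet> x) / tt \<tau> j) * (2 * x $ i / tt \<tau> j))"
  using pderiv_eq[OF GG_deriv] by (simp add: inner_axis)

lemma GG_nonneg: "0 \<le> GG \<tau> N x"
  unfolding GG_def by (intro mult_nonneg_nonneg sum_nonneg hb_nonneg) auto

lemma GG_le1: "GG \<tau> N x \<le> 1"
proof (cases "N = 0")
  case True then show ?thesis by (simp add: GG_def)
next
  case False
  have "(\<Sum>j<N. hb ((x \<bullet> x) / tt \<tau> j)) \<le> (\<Sum>j<N. 1)" by (intro sum_mono hb_le1)
  then show ?thesis using False by (simp add: GG_def)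
qed

lemma GG_supp: "\<tau> > 0 \<Longrightarrow> GG \<tau> N x \<noteq> 0 \<Longrightarrow> x \<bullet> x < \<tau>"
proof -
  assume \<tau>: "\<tau> > 0" and ne: "GG \<tau> N x \<noteq> 0"
  then obtain j where j: "j < N" "hb ((x \<bullet> x) / tt \<tau> j) \<noteq> 0"
    by (auto simp: GG_def dest: sum.not_neutral_contains_not_neutral)
  then have "(x \<bullet> x) / tt \<tau> j < 1" using hb_zero[of "(x \<bullet> x) / tt \<tau> j"] by linarith
  then have "x \<bullet> x < tt \<tau> j" using tt_pos[OF \<tau>, of j] by (simp add: divide_less_eq)
  also have "\<dots> \<le> tt \<tau> 0" using tt_le[OF \<tau>] by blast
  finally show ?thesis by (simp add: tt_def)
qed

lemma GG_one: "\<tau> > 0 \<Longrightarrow> N > 0 \<Longrightarrow> x \<bullet> x \<le> tt \<tau> (N - 1) / 4 \<Longrightarrow> GG \<tau> N x = 1"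
proof -
  assume \<tau>: "\<tau> > 0" and N: "N > 0" and x: "x \<bullet> x \<le> tt \<tau> (N - 1) / 4"
  have "hb ((x \<bullet> x) / tt \<tau> j) = 1" if "j < N" for j
  proof (rule hb_one)
    have "tt \<tau> (N - 1) \<le> tt \<tau> j" using tt_le[OF \<tau>, of j "N - 1"] that by simp
    then have "x \<bullet> x \<le> tt \<tau> j / 4" using x by simp
    then show "(x \<bullet> x) / tt \<tau> j \<le> 1/4" using tt_pos[OF \<tau>, of j] by (simp add: divide_le_eq)
  qed
  then show ?thesis using N by (simp add: GG_def)
qed

lemma test_fun_GG: "\<tau> > 0 \<Longrightarrow> test_fun (GG \<tau> N :: real^'n \<Rightarrow> real)"
proof -
  assume \<tau>: "\<tau> > 0"
  have "{x::real^'n. GG \<tau> N x \<noteq> 0} \<subseteq> cball 0 (sqrt \<tau>)"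
  proof
    fix x :: "real^'n" assume "x \<in> {x. GG \<tau> N x \<noteq> 0}"
    then have "x \<bullet> x < \<tau>" using GG_supp[OF \<tau>] by auto
    then show "x \<in> cball 0 (sqrt \<tau>)" by (simp add: norm_eq_sqrt_inner real_sqrt_le_mono less_imp_le)
  qed
  then have "bounded {x::real^'n. GG \<tau> N x \<noteq> 0}" using bounded_cball bounded_subset by blast
  moreover have "smooth (GG \<tau> N :: real^'n \<Rightarrow> real)" by (simp add: smooth_def Ck_GG)
  ultimately show ?thesis by (simp add: test_fun_def pderiv_GG)
qed

lemma pt_bound1:
  fixes x :: "real^'n"
  assumes h: "\<bar>h\<bar> \<le> M" and xt: "x \<bullet> x \<le> t" and t: "t > 0"
  shows "x $ i * (h * (2 * x $ i / t))^2 \<le> 4 * M^2 / sqrt t"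
proof -
  define y where "y = x $ i"
  define s where "s = sqrt t"
  have s: "s > 0" "s^2 = t" using t by (auto simp: s_def)
  have "norm x \<le> s" using xt by (simp add: s_def norm_eq_sqrt_inner real_sqrt_le_mono)
  then have ys: "\<bar>y\<bar> \<le> s" using component_le_norm_cart[of x i] by (simp add: y_def)
  have eq: "y * (h * (2 * y / t))^2 = y^3 * (4 * h^2 / t^2)"
    by (simp add: power2_eq_square power3_eq_cube field_simps)
  have "y^3 \<le> \<bar>y\<bar>^3" by (metis abs_ge_self power_abs power_mono abs_ge_zero order_trans le_cases abs_of_nonneg)
  also have "\<dots> \<le> s^3" by (rule power_mono[OF ys]) simp
  finally have y3: "y^3 \<le> s^3" .
  have "h^2 = \<bar>h\<bar>^2" by simp
  also have "\<dots> \<le> M^2" by (rule power_mono[OF h]) simp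
  finally have h2: "h^2 \<le> M^2" .
  have "y^3 * (4 * h^2 / t^2) \<le> s^3 * (4 * h^2 / t^2)"
    by (rule mult_right_mono[OF y3]) simp
  also have "\<dots> \<le> s^3 * (4 * M^2 / t^2)"
    by (rule mult_left_mono) (use h2 s in \<open>auto intro!: divide_right_mono\<close>)
  also have "\<dots> = 4 * M^2 / s"
    using s t by (simp add: field_simps power2_eq_square power3_eq_cube)
  finally have "y * (h * (2 * y / t))^2 \<le> 4 * M^2 / s" unfolding eq .
  then show ?thesis by (simp only: y_def s_def)
qed

lemma pt_bound:
  fixes x :: "real^'n"
  assumes \<tau>: "\<tau> > 0" and M: "\<And>s. \<bar>hb' s\<bar> \<le> M"
  shows "x $ i * (pderiv_i (GG \<tau> N) i x)^2 \<le> (\<Sum>j<N. (4 * M^2 / sqrt (tt \<tau> j) / (real N)^2) * indicator (Sb (tt \<tau> j)) x)"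
proof -
  define a where "a j = hb' ((x \<bullet> x) / tt \<tau> j) * (2 * x $ i / tt \<tau> j)" for j
  have M0: "0 \<le> M" using M[of 0] by linarith
  have nn: "0 \<le> (4 * M^2 / sqrt (tt \<tau> j) / (real N)^2) * indicator (Sb (tt \<tau> j)) x" for j
    using tt_pos[OF \<tau>, of j] by (auto split: split_indicator)
  have ann: "tt \<tau> j / 4 \<le> x \<bullet> x \<and> x \<bullet> x \<le> tt \<tau> j" if "a j \<noteq> 0" for j
  proof -
    have "hb' ((x \<bullet> x) / tt \<tau> j) \<noteq> 0" using that by (auto simp: a_def)
    then have "1/4 \<le> (x \<bullet> x) / tt \<tau> j \<and> (x \<bullet> x) / tt \<tau> j \<le> 1" using hb'_zero by force
    then show ?thesis using tt_pos[OF \<tau>, of j] by (simp add: divide_le_eq le_divide_eq)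
  qed
  have pd: "pderiv_i (GG \<tau> N) i x = (1 / real N) * (\<Sum>j<N. a j)" by (simp add: pderiv_GG a_def)
  show ?thesis
  proof (cases "\<exists>j0<N. a j0 \<noteq> 0")
    case False
    then have "pderiv_i (GG \<tau> N) i x = 0" by (simp add: pd)
    then show ?thesis using nn by (simp add: sum_nonneg)
  next
    case True
    then obtain j0 where j0: "j0 < N" "a j0 \<noteq> 0" by blast
    have uniq: "a j = 0" if "j < N" "j \<noteq> j0" for j
    proof (rule ccontr)
      assume aj: "a j \<noteq> 0"
      have A: "tt \<tau> j / 4 \<le> x \<bullet> x" "x \<bullet> x \<le> tt \<tau> j" using ann[OF aj] by auto
      have B: "tt \<tau> j0 / 4 \<le> x \<bullet> x" "x \<bullet> x \<le> tt \<tau> j0" using ann[OF j0(2)] by auto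
      show False
      proof (cases "j < j0")
        case True
        then have "tt \<tau> j0 \<le> tt \<tau> j / 8" by (rule tt_lt8[OF \<tau>])
        then show False using A B tt_pos[OF \<tau>, of j] by linarith
      next
        case False
        then have "j0 < j" using that by simp
        then have "tt \<tau> j \<le> tt \<tau> j0 / 8" by (rule tt_lt8[OF \<tau>])
        then show False using A B tt_pos[OF \<tau>, of j0] by linarith
      qed
    qed
    have "(\<Sum>j<N. a j) = a j0 + (\<Sum>j\<in>{..<N} - {j0}. a j)"
      using j0 by (simp add: sum.remove)
    also have "(\<Sum>j\<in>{..<N} - {j0}. a j) = 0" using uniq by (intro sum.neutral) auto
    finally have sa: "(\<Sum>j<N. a j) = a j0" by simp
    have xin: "x \<in> Sb (tt \<tau> j0)" using ann[OF j0(2)] by (simp add: Sb_def)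
    have "x $ i * (a j0)^2 \<le> 4 * M^2 / sqrt (tt \<tau> j0)"
      unfolding a_def by (rule pt_bound1[OF M]) (use ann[OF j0(2)] tt_pos[OF \<tau>] in auto)
    then have le1: "x $ i * (a j0)^2 / (real N)^2 \<le> 4 * M^2 / sqrt (tt \<tau> j0) / (real N)^2"
      by (rule divide_right_mono) simp
    have e1: "x $ i * (pderiv_i (GG \<tau> N) i x)^2 = x $ i * (a j0)^2 / (real N)^2"
      by (simp add: pd sa power_mult_distrib power_divide)
    have e2: "(4 * M^2 / sqrt (tt \<tau> j0) / (real N)^2) * indicator (Sb (tt \<tau> j0)) x = 4 * M^2 / sqrt (tt \<tau> j0) / (real N)^2"
      using xin by simp
    have "x $ i * (pderiv_i (GG \<tau> N) i x)^2 \<le> (4 * M^2 / sqrt (tt \<tau> j0) / (real N)^2) * indicator (Sb (tt \<tau> j0)) x"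
      unfolding e1 e2 by (rule le1)
    also have "\<dots> \<le> (\<Sum>j<N. (4 * M^2 / sqrt (tt \<tau> j) / (real N)^2) * indicator (Sb (tt \<tau> j)) x)"
      by (rule member_le_sum[where f = "\<lambda>j. (4 * M^2 / sqrt (tt \<tau> j) / (real N)^2) * indicator (Sb (tt \<tau> j)) x"])
         (use j0 nn in auto)
    finally show ?thesis .
  qed
qed

locale setup_nu =
  fixes \<nu> \<theta> :: "'n::finite \<Rightarrow> real"
  assumes \<nu>: "\<And>i. \<nu> i > 0" and \<theta>: "\<And>i. \<theta> i > 0" and V: "(\<Sum>i\<in>UNIV. \<nu> i) \<ge> 1"
begin

abbreviation "\<pi> \<equiv> gamma_prod \<nu> \<theta>"

lemma Sb_sets[measurable]: "Sb t \<in> sets \<pi>" by simp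

lemma Sb_fin: "0 < t \<Longrightarrow> t \<le> 1 \<Longrightarrow> emeasure \<pi> (Sb t) < \<infinity>"
  by (rule ball_measure(1)) (use \<nu> \<theta> V in auto)

lemma Sb_meas: "0 < t \<Longrightarrow> t \<le> 1 \<Longrightarrow> measure \<pi> (Sb t) \<le> Cg \<nu> \<theta> * sqrt t"
  by (rule ball_measure(2)) (use \<nu> \<theta> V in auto)

lemma tt_le1: "0 < \<tau> \<Longrightarrow> \<tau> \<le> 1 \<Longrightarrow> tt \<tau> j \<le> 1"
  unfolding tt_def by (rule mult_le_one) (auto simp: power_le_one)

lemma int_deriv_bound:
  assumes \<tau>: "0 < \<tau>" "\<tau> \<le> 1" and N: "N > 0" and M: "\<And>s. \<bar>hb' s\<bar> \<le> M"
  shows "integral\<^sup>L \<pi> (\<lambda>x. x $ i * (pderiv_i (GG \<tau> N) i x)^2) \<le> 4 * M^2 * Cg \<nu> \<theta> / real N"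
proof -
  define c where "c j = 4 * M^2 / sqrt (tt \<tau> j) / (real N)^2" for j
  define R where "R x = (\<Sum>j<N. c j * indicator (Sb (tt \<tau> j)) x)" for x :: "real^'n"
  have cnn: "0 \<le> c j" for j using tt_pos[OF \<tau>(1), of j] by (simp add: c_def)
  have ii: "integrable \<pi> (\<lambda>x. c j * indicator (Sb (tt \<tau> j)) x :: real)" for j
    using Sb_fin[OF tt_pos[OF \<tau>(1)] tt_le1[OF \<tau>]] by (intro integrable_mult_right integrable_real_indicator) auto
  have iR: "integrable \<pi> R" unfolding R_def[abs_def]
    by (intro Bochner_Integration.integrable_sum ii)
  have "integral\<^sup>L \<pi> (\<lambda>x. x $ i * (pderiv_i (GG \<tau> N) i x)^2) \<le> integral\<^sup>L \<pi> R"
  proof (rule integral_mono_AE'[OF iR])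
    show "AE x in \<pi>. x $ i * (pderiv_i (GG \<tau> N) i x)^2 \<le> R x"
    proof (rule AE_I2)
      fix x :: "real^'n"
      show "x $ i * (pderiv_i (GG \<tau> N) i x)^2 \<le> R x"
        unfolding R_def c_def by (rule pt_bound[OF \<tau>(1) M])
    qed
    show "AE x in \<pi>. 0 \<le> R x"
    proof (rule AE_I2)
      fix x :: "real^'n"
      show "0 \<le> R x" unfolding R_def using cnn by (intro sum_nonneg mult_nonneg_nonneg) auto
    qed
  qed
  also have "integral\<^sup>L \<pi> R = (\<Sum>j<N. c j * measure \<pi> (Sb (tt \<tau> j)))"
    unfolding R_def[abs_def] by (subst Bochner_Integration.integral_sum[OF ii]) (simp_all add: integral_mult_right_zero)
  also have "\<dots> \<le> (\<Sum>j<N. c j * (Cg \<nu> \<theta> * sqrt (tt \<tau> j)))"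
    using Sb_meas[OF tt_pos[OF \<tau>(1)] tt_le1[OF \<tau>]] cnn by (intro sum_mono mult_left_mono) auto
  also have "\<dots> = (\<Sum>j<N. 4 * M^2 * Cg \<nu> \<theta> / (real N)^2)"
  proof (intro sum.cong refl)
    fix j
    have "sqrt (tt \<tau> j) > 0" using tt_pos[OF \<tau>(1), of j] by simp
    then show "c j * (Cg \<nu> \<theta> * sqrt (tt \<tau> j)) = 4 * M^2 * Cg \<nu> \<theta> / (real N)^2"
      by (simp add: c_def field_simps)
  qed
  also have "\<dots> = 4 * M^2 * Cg \<nu> \<theta> / real N"
    using N by (simp add: power2_eq_square)
  finally show ?thesis .
qed

lemma GG_meas[measurable]: "GG \<tau> N \<in> borel_measurable \<pi>"
proof -
  have "continuous_on UNIV (GG \<tau> N :: real^'n \<Rightarrow> real)" using Ck_GG[of 0 \<tau> N] by (simp only: Ck.simps)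
  then have "GG \<tau> N \<in> borel_measurable (borel :: (real^'n) measure)" by (rule borel_measurable_continuous_onI)
  then show ?thesis by (subst measurable_cong_sets[OF sets_gamma refl])
qed

lemma GG_sq_le: "0 < \<tau> \<Longrightarrow> (GG \<tau> N x)^2 \<le> indicator (Sb \<tau>) x"
proof (cases "x \<in> Sb \<tau>")
  case True
  have "(GG \<tau> N x)^2 \<le> 1" by (rule power_le_one[OF GG_nonneg GG_le1])
  then show ?thesis using True by simp
next
  case False
  assume "0 < \<tau>"
  have "\<not> x \<bullet> x < \<tau>" using False by (simp add: Sb_def)
  then have "GG \<tau> N x = 0" using GG_supp[of \<tau> N x] \<open>0 < \<tau>\<close> by blast
  then show ?thesis by simp
qed

lemma int_sq:
  assumes \<tau>: "0 < \<tau>" "\<tau> \<le> 1"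
  shows "integrable \<pi> (\<lambda>x. (GG \<tau> N x)^2)" and "integral\<^sup>L \<pi> (\<lambda>x. (GG \<tau> N x)^2) \<le> Cg \<nu> \<theta> * sqrt \<tau>"
proof -
  have iI: "integrable \<pi> (indicator (Sb \<tau>) :: real^'n \<Rightarrow> real)"
    using Sb_fin[OF \<tau>] by (intro integrable_real_indicator) auto
  show "integrable \<pi> (\<lambda>x. (GG \<tau> N x)^2)"
  proof (rule Bochner_Integration.integrable_bound[OF iI])
    show "(\<lambda>x. (GG \<tau> N x)^2) \<in> borel_measurable \<pi>" by measurable
    show "AE x in \<pi>. norm ((GG \<tau> N x)^2) \<le> norm (indicator (Sb \<tau>) x :: real)"
    proof (rule AE_I2)
      fix x :: "real^'n"
      show "norm ((GG \<tau> N x)^2) \<le> norm (indicator (Sb \<tau>) x :: real)"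
        using GG_sq_le[OF \<tau>(1), of N x] by simp
    qed
  qed
  have "integral\<^sup>L \<pi> (\<lambda>x. (GG \<tau> N x)^2) \<le> integral\<^sup>L \<pi> (indicator (Sb \<tau>))"
  proof (rule integral_mono_AE'[OF iI])
    show "AE x in \<pi>. (GG \<tau> N x)^2 \<le> indicator (Sb \<tau>) x"
      by (rule AE_I2) (rule GG_sq_le[OF \<tau>(1)])
    show "AE x in \<pi>. 0 \<le> (indicator (Sb \<tau>) x :: real)" by (rule AE_I2) simp
  qed
  also have "\<dots> = measure \<pi> (Sb \<tau>)" by simp
  also have "\<dots> \<le> Cg \<nu> \<theta> * sqrt \<tau>" by (rule Sb_meas[OF \<tau>])
  finally show "integral\<^sup>L \<pi> (\<lambda>x. (GG \<tau> N x)^2) \<le> Cg \<nu> \<theta> * sqrt \<tau>" .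
qed

end

lemma AE_Rplus: "AE x in gamma_prod \<nu> \<theta>. x \<in> Rplus"
proof -
  have m: "dens \<nu> \<theta> \<in> borel_measurable lborel" by simp
  show ?thesis unfolding gamma_prod_dens AE_density[OF m]
  proof (rule AE_I2, rule impI)
    fix x :: "real^'a" assume "0 < dens \<nu> \<theta> x"
    then show "x \<in> Rplus" by (cases "x \<in> Rplus") (auto simp: dens_def)
  qed
qed

lemma CIR_nonneg: "0 \<le> CIR_form \<kappa> \<theta> \<sigma> g"
  unfolding CIR_form_def
proof (intro mult_nonneg_nonneg sum_nonneg)
  fix i
  show "0 \<le> integral\<^sup>L (gamma_prod (nu \<kappa> \<theta> \<sigma>) \<theta>) (\<lambda>x. x $ i * (pderiv_i g i x)\<^sup>2)"
  proof (rule integral_nonneg_AE)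
    show "AE x in gamma_prod (nu \<kappa> \<theta> \<sigma>) \<theta>. 0 \<le> x $ i * (pderiv_i g i x)\<^sup>2"
      using AE_Rplus by eventually_elim (auto simp: Rplus_def)
  qed
qed auto

lemma cap_open_nonneg: "0 \<le> cap_open \<kappa> \<theta> \<sigma> U"
  unfolding cap_open_def Let_def
proof (rule Inf_greatest, clarify)
  fix c g f
  assume lim: "(\<lambda>k. CIR_form \<kappa> \<theta> \<sigma> (g k) + integral\<^sup>L (gamma_prod (nu \<kappa> \<theta> \<sigma>) \<theta>) (\<lambda>x. (g k x)\<^sup>2)) \<longlonglongrightarrow> c"
  have "0 \<le> c"
  proof (rule LIMSEQ_le_const[OF lim], intro exI allI impI)
    fix k
    show "0 \<le> CIR_form \<kappa> \<theta> \<sigma> (g k) + integral\<^sup>L (gamma_prod (nu \<kappa> \<theta> \<sigma>) \<theta>) (\<lambda>x. (g k x)\<^sup>2)"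
      using CIR_nonneg[of \<kappa> \<theta> \<sigma> "g k"] by (intro add_nonneg_nonneg integral_nonneg_AE) auto
  qed
  then show "0 \<le> ereal c" by simp
qed

lemma CIR_zero: "CIR_form \<kappa> \<theta> \<sigma> (\<lambda>x. 0) = 0"
  by (simp add: CIR_form_def pderiv_i_def)

lemma cap_small:
  fixes \<kappa> \<theta> \<sigma> :: "'n::finite \<Rightarrow> real"
  assumes \<kappa>: "\<forall>i. \<kappa> i > 0" and \<theta>: "\<forall>i. \<theta> i > 0" and \<sigma>: "\<forall>i. \<sigma> i > 0"
    and V: "(\<Sum>i\<in>UNIV. nu \<kappa> \<theta> \<sigma> i) \<ge> 1" and \<epsilon>: "\<epsilon> > 0"
  shows "cap \<kappa> \<theta> \<sigma> {0 :: real ^ 'n} \<le> ereal \<epsilon>"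
proof -
  define \<nu> where "\<nu> = nu \<kappa> \<theta> \<sigma>"
  have \<nu>pos: "\<And>i. \<nu> i > 0"
  proof -
    fix i have si: "\<sigma> i \<noteq> 0" using \<sigma> by (metis less_irrefl)
    have "0 < 2 * \<kappa> i * \<theta> i / (\<sigma> i)^2" using \<kappa> \<theta> \<sigma> by (intro divide_pos_pos mult_pos_pos) (use si in auto)
    then show "\<nu> i > 0" by (simp add: \<nu>_def nu_def)
  qed
  interpret setup_nu \<nu> \<theta> using \<nu>pos \<theta> V by unfold_locales (auto simp: \<nu>_def)
  obtain M where M0: "M > 0" and M: "\<And>s. \<bar>hb' s\<bar> \<le> M" using hb'_bound by blast
  define S2 where "S2 = (\<Sum>i\<in>UNIV. (\<sigma> i)^2)"
  have S2: "S2 \<ge> 0" unfolding S2_def by (intro sum_nonneg) auto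
  define C where "C = Cg \<nu> \<theta>"
  have C: "C > 0" unfolding C_def by (rule Cg_pos) (use \<nu>pos \<theta> in auto)
  define K where "K = 2 * M^2 * C * S2"
  have K: "K \<ge> 0" unfolding K_def using M0 C S2 by simp
  define N :: nat where "N = nat \<lceil>2 * K / \<epsilon>\<rceil> + 1"
  have N: "N > 0" by (simp add: N_def)
  have "2 * K / \<epsilon> < real N" unfolding N_def by linarith
  then have "2 * K < real N * \<epsilon>" using \<epsilon> by (simp add: divide_less_eq mult.commute)
  then have KN: "K / real N \<le> \<epsilon> / 2" using N by (simp add: divide_le_eq field_simps)
  define \<tau> where "\<tau> = min 1 ((\<epsilon> / (2 * (C + 1)))^2)"
  have \<tau>: "0 < \<tau>" "\<tau> \<le> 1" using \<epsilon> C by (auto simp: \<tau>_def)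
  have "sqrt \<tau> \<le> sqrt ((\<epsilon> / (2 * (C + 1)))^2)" by (rule real_sqrt_le_mono) (simp add: \<tau>_def)
  also have "\<dots> = \<epsilon> / (2 * (C + 1))" using \<epsilon> C by simp
  finally have st: "sqrt \<tau> \<le> \<epsilon> / (2 * (C + 1))" .
  have "C * sqrt \<tau> \<le> C * (\<epsilon> / (2 * (C + 1)))" by (rule mult_left_mono[OF st]) (use C in auto)
  also have "\<dots> \<le> \<epsilon> / 2" using C \<epsilon> by (simp add: field_simps)
  finally have Cst: "C * sqrt \<tau> \<le> \<epsilon> / 2" .
  define G :: "real^'n \<Rightarrow> real" where "G = GG \<tau> N"
  have tG: "test_fun G" unfolding G_def by (rule test_fun_GG[OF \<tau>(1)])
  have D: "CIR_form \<kappa> \<theta> \<sigma> G \<le> K / real N"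
  proof -
    have "CIR_form \<kappa> \<theta> \<sigma> G = 1/2 * (\<Sum>i\<in>UNIV. (\<sigma> i)^2 * integral\<^sup>L \<pi> (\<lambda>x. x $ i * (pderiv_i (GG \<tau> N) i x)^2))"
      by (simp add: CIR_form_def \<nu>_def G_def)
    also have "\<dots> \<le> 1/2 * (\<Sum>i\<in>UNIV. (\<sigma> i)^2 * (4 * M^2 * C / real N))"
      using int_deriv_bound[OF \<tau> N M] by (intro mult_left_mono sum_mono) (auto simp: C_def)
    also have "(\<Sum>i\<in>UNIV. (\<sigma> i)^2 * (4 * M^2 * C / real N)) = S2 * (4 * M^2 * C / real N)"
      unfolding S2_def by (rule sum_distrib_right[symmetric])
    also have "1/2 * (S2 * (4 * M^2 * C / real N)) = K / real N" by (simp add: K_def)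
    finally show ?thesis .
  qed
  have I: "integral\<^sup>L \<pi> (\<lambda>x. (G x)^2) \<le> C * sqrt \<tau>"
    using int_sq(2)[OF \<tau>] by (simp add: G_def C_def)
  define c where "c = CIR_form \<kappa> \<theta> \<sigma> G + integral\<^sup>L \<pi> (\<lambda>x. (G x)^2)"
  have c: "c \<le> \<epsilon>" using D I KN Cst unfolding c_def by linarith
  define r where "r = sqrt (tt \<tau> (N - 1)) / 2"
  define U where "U = Rplus \<inter> ball (0::real^'n) r"
  have Uo: "openin (top_of_set Rplus) U" unfolding U_def by (rule openin_open_Int) simp
  have r: "r > 0" using tt_pos[OF \<tau>(1)] by (simp add: r_def)
  have U0: "{0} \<subseteq> U" using r by (simp add: U_def Rplus_def)
  have G1: "1 \<le> G x" if "x \<in> U" for x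
  proof -
    have "norm x < r" using that by (simp add: U_def)
    then have "(norm x)^2 < r^2" by (simp add: power_strict_mono)
    then have "x \<bullet> x \<le> tt \<tau> (N - 1) / 4"
      using tt_pos[OF \<tau>(1), of "N - 1"] by (simp add: r_def power2_norm_eq_inner power_divide)
    then have "GG \<tau> N x = 1" by (rule GG_one[OF \<tau>(1) N])
    then show ?thesis by (simp add: G_def)
  qed
  have "cap_open \<kappa> \<theta> \<sigma> U \<le> ereal c"
    unfolding cap_open_def Let_def
  proof (rule Inf_lower, simp only: mem_Collect_eq, intro exI conjI)
    show "ereal c = ereal c" ..
    show "\<forall>k. test_fun ((\<lambda>k. G) k)" using tG by simp
    show "G \<in> borel_measurable (gamma_prod (nu \<kappa> \<theta> \<sigma>) \<theta>)"
      using GG_meas[of \<tau> N] by (simp add: G_def \<nu>_def)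
    show "integrable (gamma_prod (nu \<kappa> \<theta> \<sigma>) \<theta>) (\<lambda>x. (G x)\<^sup>2)"
      using int_sq(1)[OF \<tau>] by (simp add: G_def \<nu>_def)
    show "(\<lambda>k. integral\<^sup>L (gamma_prod (nu \<kappa> \<theta> \<sigma>) \<theta>) (\<lambda>x. ((\<lambda>k. G) k x - G x)\<^sup>2)) \<longlonglongrightarrow> 0" by simp
    show "\<forall>\<epsilon>>0. \<exists>N. \<forall>k\<ge>N. \<forall>m\<ge>N. CIR_form \<kappa> \<theta> \<sigma> (\<lambda>x. (\<lambda>k. G) k x - (\<lambda>k. G) m x) < \<epsilon>"
      by (simp add: CIR_zero)
    show "(\<lambda>k. CIR_form \<kappa> \<theta> \<sigma> ((\<lambda>k. G) k) + integral\<^sup>L (gamma_prod (nu \<kappa> \<theta> \<sigma>) \<theta>) (\<lambda>x. ((\<lambda>k. G) k x)\<^sup>2)) \<longlonglongrightarrow> c"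
      by (simp add: c_def \<nu>_def)
    show "AE x in gamma_prod (nu \<kappa> \<theta> \<sigma>) \<theta>. x \<in> U \<longrightarrow> 1 \<le> G x"
      using G1 by simp
  qed
  also have "\<dots> \<le> ereal \<epsilon>" using c by simp
  finally have cu: "cap_open \<kappa> \<theta> \<sigma> U \<le> ereal \<epsilon>" .
  have "cap \<kappa> \<theta> \<sigma> {0} \<le> cap_open \<kappa> \<theta> \<sigma> U"
    unfolding cap_def by (rule Inf_lower) (use Uo U0 in blast)
  with cu show ?thesis by simp
qed

theorem proposition3:
  fixes \<kappa> \<theta> \<sigma> :: "'n::finite \<Rightarrow> real"
  assumes "\<forall>i. \<kappa> i > 0" and "\<forall>i. \<theta> i > 0" and "\<forall>i. \<sigma> i > 0"
    and "(\<Sum>i\<in>UNIV. nu \<kappa> \<theta> \<sigma> i) \<ge> 1"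
  shows "polar \<kappa> \<theta> \<sigma> {0 :: real ^ 'n}"
proof -
  have ge: "0 \<le> cap \<kappa> \<theta> \<sigma> {0 :: real ^ 'n}"
    unfolding cap_def by (rule Inf_greatest) (use cap_open_nonneg in blast)
  have le: "cap \<kappa> \<theta> \<sigma> {0 :: real ^ 'n} \<le> 0"
  proof (rule ereal_le_epsilon)
    fix e :: ereal assume e: "0 < e"
    show "cap \<kappa> \<theta> \<sigma> {0 :: real ^ 'n} \<le> 0 + e"
    proof (cases e)
      case (real r)
      then have "r > 0" using e by simp
      then show ?thesis using cap_small[OF assms] real by simp
    next
      case PInf then show ?thesis by simp
    next
      case MInf then show ?thesis using e by simp
    qed
  qed
  show ?thesis unfolding polar_def using ge le by (rule antisym[rotated])
qed

end
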